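(* For every even integer $k\geq 2$, there are infinitely many positive integers $n$ such that $\sum_{i=0}^{k-1} \lambda(n+i)=0$, where $\lambda$ is the Liouville function.
   Context: The Liouville function is $\lambda(n)=(-1)^{\Omega(n)}$, where $\Omega(n)$ is the number of prime factors of $n$ counted with multiplicity. *)

theory Defs
  imports "HOL-Computational_Algebra.Primes"
begin

definition bigomega :: "nat \<Rightarrow> nat" where
  "bigomega n = size (prime_factorization n)"

definition liouville :: "nat \<Rightarrow> int" where
  "liouville n = (-1) ^ bigomega n"

end

theory Submission
  imports Defs "HOL-Analysis.Harmonic_Numbers"
begin


lemma liou_pm1: "liouville n = 1 \<or> liouville n = -1"
  unfolding liouville_def by (cases "even (bigomega n)") auto

lemma liou_abs: "\<bar>liouville n\<bar> = 1"
  using liou_pm1[of n] by auto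

lemma liou_one: "liouville 1 = 1"
  by (simp add: liouville_def bigomega_def)

lemma liou_prime_mult:
  assumes "prime (p::nat)" "d > 0"
  shows "liouville (p * d) = - liouville d"
proof -
  have "prime_factorization (p*d) = prime_factorization p + prime_factorization d"
    using assms by (intro prime_factorization_mult) auto
  then have "bigomega (p*d) = Suc (bigomega d)"
    using assms by (simp add: bigomega_def prime_factorization_prime)
  then show ?thesis by (simp add: liouville_def)
qed

definition fd :: "nat \<Rightarrow> int" where
  "fd n = (\<Sum>d\<in>{d. d dvd n}. liouville d)"

lemma fd_prime_mult:
  assumes p: "prime (p::nat)" and m: "m > 0"
  shows "fd (p * m) = (if p dvd m then fd (m div p) else 0)"
proof -
  define A where "A = {d. d dvd m}"
  define B where "B = (\<lambda>e. p * e) ` A"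
  have p0: "p > 0" using p prime_gt_0_nat by blast
  have finA: "finite A" unfolding A_def using m by simp
  have finB: "finite B" unfolding B_def using finA by simp
  have U: "{d. d dvd p * m} = A \<union> B"
  proof (rule set_eqI, rule iffI)
    fix d assume "d \<in> {d. d dvd p * m}"
    then have dd: "d dvd p * m" by simp
    show "d \<in> A \<union> B"
    proof (cases "p dvd d")
      case True
      then obtain e where e: "d = p * e" by blast
      then have "e dvd m" using dd p0 by simp
      then show ?thesis unfolding B_def A_def using e by auto
    next
      case False
      then have "coprime p d" using p by (simp add: prime_imp_coprime)
      then have "d dvd m" using dd
        by (metis coprime_commute coprime_dvd_mult_right_iff)
      then show ?thesis unfolding A_def by auto
    qed
  next
    fix d assume "d \<in> A \<union> B"
    then show "d \<in> {d. d dvd p * m}" unfolding A_def B_def by auto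
  qed
  have sB: "sum liouville B = - fd m"
  proof -
    have "sum liouville B = sum (\<lambda>e. liouville (p * e)) A"
      unfolding B_def using p0 by (subst sum.reindex) (auto simp: inj_on_def)
    also have "\<dots> = sum (\<lambda>e. - liouville e) A"
      apply (rule sum.cong) using liou_prime_mult[OF p] m unfolding A_def
      by (auto intro!: liou_prime_mult[OF p] dest: dvd_imp_le intro: Nat.gr0I simp: )
    also have "\<dots> = - fd m" unfolding fd_def A_def by (simp add: sum_negf)
    finally show ?thesis .
  qed
  have I: "A \<inter> B = {d. d dvd m \<and> p dvd d}"
  proof (rule set_eqI, rule iffI)
    fix x assume "x \<in> {d. d dvd m \<and> p dvd d}"
    then have x: "x dvd m" "p dvd x" by auto
    then obtain e where e: "x = p * e" by blast
    then have "e dvd m" using x dvd_trans by (metis dvd_triv_right)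
    then show "x \<in> A \<inter> B" using e x unfolding A_def B_def by auto
  qed (auto simp: A_def B_def)
  have sI: "sum liouville (A \<inter> B) = (if p dvd m then - fd (m div p) else 0)"
  proof (cases "p dvd m")
    case True
    then obtain m' where m': "m = p * m'" by blast
    then have m'0: "m' > 0" using m by auto
    have "A \<inter> B = (\<lambda>e. p * e) ` {e. e dvd m'}"
      unfolding I m' using p0 by (auto simp: image_def)
    then have "sum liouville (A \<inter> B) = sum (\<lambda>e. liouville (p * e)) {e. e dvd m'}"
      using p0 by (simp add: sum.reindex inj_on_def)
    also have "\<dots> = sum (\<lambda>e. - liouville e) {e. e dvd m'}"
      apply (rule sum.cong) using m'0 by (auto intro!: liou_prime_mult[OF p] intro: Nat.gr0I)
    also have "\<dots> = - fd m'" unfolding fd_def by (simp add: sum_negf)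
    finally show ?thesis using True m' p0 by simp
  next
    case False
    then have "A \<inter> B = {}" unfolding I using dvd_trans by blast
    then show ?thesis using False by simp
  qed
  have "fd (p*m) = sum liouville (A \<union> B)" unfolding fd_def U ..
  also have "\<dots> = sum liouville A + sum liouville B - sum liouville (A \<inter> B)"
    using finA finB by (simp add: sum_Un)
  also have "\<dots> = (if p dvd m then fd (m div p) else 0)"
    using sB sI unfolding fd_def A_def by simp
  finally show ?thesis .
qed

lemma fd_01: "n > 0 \<Longrightarrow> fd n = 0 \<or> fd n = 1"
proof (induction n rule: less_induct)
  case (less n)
  show ?case
  proof (cases "n = 1")
    case True
    have "{d. d dvd (1::nat)} = {1}" by auto
    then have "fd 1 = liouville 1" unfolding fd_def by simp
    then have "fd 1 = 1" using liou_one by simp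
    then show ?thesis using True by simp
  next
    case False
    then obtain p where p: "prime p" "p dvd n" using prime_factor_nat[OF False] by blast
    then obtain m where m: "n = p * m" by blast
    have m0: "m > 0" using m less.prems by auto
    have p1: "p > 1" using p prime_gt_1_nat by blast
    show ?thesis
    proof (cases "p dvd m")
      case True
      have "m < n" using m m0 p1 by simp
      then have "m div p < n" using div_le_dividend[of m p] by linarith
      moreover have "m div p > 0" using True m0 p1 by (auto elim!: dvdE)
      ultimately show ?thesis using less.IH fd_prime_mult[OF p(1) m0] True m by simp
    next
      case False
      then show ?thesis using fd_prime_mult[OF p(1) m0] m by simp
    qed
  qed
qed


definition LL :: "nat \<Rightarrow> int" where
  "LL y = (\<Sum>d\<in>{1..y}. liouville d)"

lemma LL_0: "LL 0 = 0" by (simp add: LL_def)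

lemma LL_Suc: "LL (Suc y) = LL y + liouville (Suc y)"
  unfolding LL_def by (simp add: sum.cl_ivl_Suc)

lemma LL_abs: "\<bar>LL y\<bar> \<le> int y"
proof (induction y)
  case 0 then show ?case by (simp add: LL_0)
next
  case (Suc y) then show ?case using LL_Suc[of y] liou_abs[of "Suc y"] by linarith
qed

lemma LL_add: "LL (y + j) = LL y + (\<Sum>i<j. liouville (y + 1 + i))"
proof (induction j)
  case 0 then show ?case by simp
next
  case (Suc j) then show ?case using LL_Suc[of "y+j"] by (simp add: add.commute add.left_commute)
qed

lemma div_div_aux: "(d::nat) dvd Suc X \<Longrightarrow> Suc X div (Suc X div d) = d"
proof -
  assume "d dvd Suc X"
  then obtain e where e: "Suc X = d * e" by blast
  have d0: "d > 0" using e by (cases d) auto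
  have e0: "e > 0" using e by (cases e) auto
  show ?thesis unfolding e using d0 e0 by simp
qed

lemma div_dvd_aux: "(d::nat) dvd Suc X \<Longrightarrow> (Suc X div d) dvd Suc X"
proof -
  assume "d dvd Suc X"
  then obtain e where e: "Suc X = d * e" by blast
  have d0: "d > 0" using e by (cases d) auto
  show ?thesis unfolding e using d0 by simp
qed

definition GG :: "nat \<Rightarrow> int" where
  "GG X = (\<Sum>q\<in>{1..X}. LL (X div q))"

lemma GG_eq: "GG X = (\<Sum>n\<in>{1..X}. fd n)"
proof (induction X)
  case 0 then show ?case by (simp add: GG_def)
next
  case (Suc X)
  have step: "LL (Suc X div q) = LL (X div q) + (if q dvd Suc X then liouville (Suc X div q) else 0)"
    if "q \<in> {1..Suc X}" for q
  proof (cases "q dvd Suc X")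
    case True
    then have "Suc X div q = Suc (X div q)" using div_Suc[of X q] by (simp add: dvd_eq_mod_eq_0)
    then show ?thesis using True LL_Suc[of "X div q"] by simp
  next
    case False
    then have "Suc X div q = X div q" using div_Suc[of X q] by (simp add: dvd_eq_mod_eq_0)
    then show ?thesis using False by simp
  qed
  have "GG (Suc X) = (\<Sum>q\<in>{1..Suc X}. LL (X div q)) +
      (\<Sum>q\<in>{1..Suc X}. if q dvd Suc X then liouville (Suc X div q) else 0)"
    unfolding GG_def using step by (simp add: sum.distrib)
  also have "(\<Sum>q\<in>{1..Suc X}. LL (X div q)) = GG X"
    unfolding GG_def by (simp add: sum.cl_ivl_Suc LL_0)
  also have "(\<Sum>q\<in>{1..Suc X}. if q dvd Suc X then liouville (Suc X div q) else 0)
      = (\<Sum>q\<in>{q. q dvd Suc X}. liouville (Suc X div q))"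
  proof -
    have "{q \<in> {1..Suc X}. q dvd Suc X} = {q. q dvd Suc X}"
    proof (rule set_eqI, rule iffI)
      fix q assume "q \<in> {q. q dvd Suc X}"
      then have q: "q dvd Suc X" by simp
      then have "q \<noteq> 0" by (metis dvd_0_left_iff nat.distinct(1))
      then show "q \<in> {q \<in> {1..Suc X}. q dvd Suc X}" using q dvd_imp_le[OF q] by auto
    qed auto
    moreover have fin: "finite {1..Suc X}" by simp
    ultimately show ?thesis unfolding sum.inter_filter[OF fin, symmetric] by simp_all
  qed
  also have "\<dots> = fd (Suc X)"
    unfolding fd_def
    by (rule sum.reindex_bij_witness[where i="\<lambda>d. Suc X div d" and j="\<lambda>d. Suc X div d"])
       (simp_all add: div_div_aux div_dvd_aux)
  finally show ?case using Suc.IH by simp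
qed

lemma GG_bounds: "0 \<le> GG X \<and> GG X \<le> int X"
proof -
  have h: "0 \<le> fd n \<and> fd n \<le> 1" if "n \<in> {1..X}" for n
  proof -
    have "n > 0" using that by simp
    then show ?thesis using fd_01[of n] by auto
  qed
  have a: "0 \<le> (\<Sum>n\<in>{1..X}. fd n)" by (rule sum_nonneg) (use h in blast)
  have b: "(\<Sum>n\<in>{1..X}. fd n) \<le> (\<Sum>n\<in>{1..X}. 1)" by (rule sum_mono) (use h in blast)
  have c: "(\<Sum>n\<in>{1..X}. (1::int)) = int X" by simp
  show ?thesis using a b c GG_eq[of X] by linarith
qed



lemma div_lb: "q > 0 \<Longrightarrow> real (X div q) \<ge> real X / real q - 1"
proof -
  assume q: "q > 0"
  have "X = q * (X div q) + X mod q" by simp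
  moreover have "X mod q < q" using q by simp
  ultimately have "real X < real q * (real (X div q) + 1)"
    by (metis add_less_cancel_left distrib_left mult.right_neutral of_nat_add of_nat_less_iff of_nat_mult of_nat_1)
  then have "real X / real q < real (X div q) + 1" using q by (simp add: divide_less_eq mult.commute)
  then show ?thesis by linarith
qed

lemma key:
  fixes M :: "nat \<Rightarrow> real" and k :: nat and C :: real
  assumes k: "k > 0" and lb: "\<And>y. M y \<ge> real y / real k - C"
    and ub: "\<And>X. (\<Sum>q\<in>{1..X}. M (X div q)) \<le> real X"
  shows False
proof -
  have bound: "harm X \<le> real k * (C + 1) + 1" if X: "X \<ge> 1" for X
  proof -
    have each: "M (X div q) \<ge> (real X * inverse (real q) - 1) / real k - C" if "q \<in> {1..X}" for q
    proof -
      have "q > 0" using that by simp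
      then have "real (X div q) \<ge> real X * inverse (real q) - 1" using div_lb[of q X] by (simp add: field_simps)
      then have "real (X div q) / real k \<ge> (real X * inverse (real q) - 1) / real k"
        using k by (simp add: divide_right_mono)
      then show ?thesis using lb[of "X div q"] by linarith
    qed
    have "(\<Sum>q\<in>{1..X}. (real X * inverse (real q) - 1) / real k - C) \<le> (\<Sum>q\<in>{1..X}. M (X div q))"
      by (rule sum_mono) (use each in blast)
    also have "\<dots> \<le> real X" by (rule ub)
    finally have A: "(\<Sum>q\<in>{1..X}. (real X * inverse (real q) - 1) / real k - C) \<le> real X" .
    have "(\<Sum>q\<in>{1..X}. (real X * inverse (real q) - 1) / real k - C)
        = (real X * harm X - real X) / real k - C * real X"
      unfolding harm_def by (simp add: sum_subtractf sum_divide_distrib[symmetric] sum_distrib_left)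
    then have "(real X * harm X - real X) / real k - C * real X \<le> real X" using A by simp
    then have "(real X * harm X - real X) \<le> real k * (C * real X + real X)"
      using k by (simp add: divide_le_eq algebra_simps)
    then have "real X * (harm X - 1) \<le> real X * (real k * (C + 1))"
      by (simp add: algebra_simps)
    then have "harm X - 1 \<le> real k * (C + 1)" using X by (simp add: mult_le_cancel_left)
    then show ?thesis by simp
  qed
  define B where "B = real k * (C + 1) + 2"
  define X where "X = nat \<lceil>exp B\<rceil>"
  have "exp B > 0" by simp
  then have X1: "X \<ge> 1" unfolding X_def by linarith
  have "real X \<ge> exp B" unfolding X_def by linarith
  then have "ln (real X + 1) > B"
    by (smt (verit) exp_gt_zero ln_exp ln_less_cancel_iff)
  moreover have "ln (real X + 1) \<le> harm X" by (rule harm_ge_ln)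
  ultimately show False using bound[OF X1] unfolding B_def by linarith
qed



definition SS :: "nat \<Rightarrow> nat \<Rightarrow> int" where
  "SS k n = (\<Sum>i<k. liouville (n + i))"

lemma SS_even: "even k \<Longrightarrow> even (SS k n)"
proof -
  assume ek: "even k"
  have "even (\<Sum>i<k. liouville (n + i) + 1)"
  proof (rule dvd_sum)
    fix i show "2 dvd liouville (n + i) + 1" using liou_pm1[of "n+i"] by auto
  qed
  then have "even (SS k n + int k)" unfolding SS_def by (simp add: sum.distrib)
  then show ?thesis using ek by simp
qed

lemma SS_step: "SS k (Suc n) = SS k n + liouville (n + k) - liouville n"
proof -
  have "(\<Sum>i<Suc k. liouville (n + i)) = liouville (n + 0) + (\<Sum>i<k. liouville (n + Suc i))"
    by (rule sum.lessThan_Suc_shift)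
  moreover have "(\<Sum>i<Suc k. liouville (n + i)) = (\<Sum>i<k. liouville (n + i)) + liouville (n + k)"
    by simp
  ultimately show ?thesis unfolding SS_def by simp
qed

lemma LL_SS: "LL (y + k) = LL y + SS k (Suc y)"
  unfolding SS_def using LL_add[of y k] by simp

lemma LL_lower:
  fixes s :: int
  assumes s: "s = 1 \<or> s = -1" and k: "k > 0"
    and pos: "\<And>n. n \<ge> N \<Longrightarrow> s * SS k n \<ge> 1"
  shows "real_of_int (s * LL y) \<ge> real y / real k - (2 * real N + 2 * real k)"
proof (induction y rule: less_induct)
  case (less y)
  show ?case
  proof (cases "y < N + k")
    case True
    have "\<bar>s * LL y\<bar> \<le> int y" using s LL_abs[of y] by auto
    then have "real_of_int (s * LL y) \<ge> - real y" by linarith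
    moreover have "real y / real k \<le> real y"
    proof -
      have "real k \<ge> 1" using k by simp
      then have "real y * 1 \<le> real y * real k" by (intro mult_left_mono) simp_all
      then show ?thesis using k by (simp add: divide_le_eq)
    qed
    moreover have "real y \<le> real N + real k" using True by simp
    ultimately show ?thesis by linarith
  next
    case False
    define y' where "y' = y - k"
    have y': "y = y' + k" "y' \<ge> N" using False unfolding y'_def by simp_all
    have IH: "real_of_int (s * LL y') \<ge> real y' / real k - (2 * real N + 2 * real k)"
      using less.IH y' k by simp
    have "s * SS k (Suc y') \<ge> 1" using pos y' by simp
    then have "s * LL y \<ge> s * LL y' + 1" using LL_SS[of y' k] y' by (simp add: algebra_simps)
    moreover have "real y / real k = real y' / real k + 1" using y' k by (simp add: field_simps)
    ultimately show ?thesis using IH by linarith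
  qed
qed

lemma no_sign:
  fixes s :: int
  assumes s: "s = 1 \<or> s = -1" and k: "k > 0"
    and pos: "\<And>n. n \<ge> N \<Longrightarrow> s * SS k n \<ge> 1"
  shows False
proof (rule key[where k=k and M="\<lambda>y. real_of_int (s * LL y)" and C="2 * real N + 2 * real k"])
  show "k > 0" by (rule k)
  show "\<And>y. real y / real k - (2 * real N + 2 * real k) \<le> real_of_int (s * LL y)"
    by (rule LL_lower[OF s k pos])
  fix X
  have "(\<Sum>q\<in>{1..X}. real_of_int (s * LL (X div q))) = real_of_int (s * GG X)"
    unfolding GG_def by (simp add: sum_distrib_left)
  moreover have "s * GG X \<le> int X" using GG_bounds[of X] s by auto
  moreover have "real_of_int (s * GG X) \<le> real_of_int (int X)"
    using \<open>s * GG X \<le> int X\<close> by (simp only: of_int_le_iff)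
  ultimately show "(\<Sum>q\<in>{1..X}. real_of_int (s * LL (X div q))) \<le> real X" by simp
qed

theorem corollary5p1:
  fixes k :: nat
  assumes "even k" and "k \<ge> 2"
  shows "infinite {n :: nat. n > 0 \<and> (\<Sum>i<k. liouville (n + i)) = 0}"
proof
  assume fin: "finite {n :: nat. n > 0 \<and> (\<Sum>i<k. liouville (n + i)) = 0}"
  then obtain N0 where N0: "{n :: nat. n > 0 \<and> (\<Sum>i<k. liouville (n + i)) = 0} \<subseteq> {..<N0}"
    using finite_nat_bounded by blast
  define N where "N = N0 + 1"
  have k0: "k > 0" using assms by simp
  have nz: "SS k n \<noteq> 0" if "n \<ge> N" for n
  proof
    assume "SS k n = 0"
    then have "n \<in> {n :: nat. n > 0 \<and> (\<Sum>i<k. liouville (n + i)) = 0}"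
      using that unfolding SS_def N_def by simp
    then have "n < N0" using N0 by blast
    then show False using that unfolding N_def by simp
  qed
  have big: "SS k n \<ge> 2 \<or> SS k n \<le> -2" if "n \<ge> N" for n
  proof -
    have "even (SS k n)" using SS_even assms(1) by blast
    then obtain m where m: "SS k n = 2 * m" by (auto elim!: evenE)
    then have "m \<noteq> 0" using nz[OF that] by simp
    then have "m \<ge> 1 \<or> m \<le> -1" by linarith
    then show ?thesis using m by linarith
  qed
  have stepb: "\<bar>SS k (Suc n) - SS k n\<bar> \<le> 2" for n
    using SS_step[of k n] liou_abs[of "n+k"] liou_abs[of n] by linarith
  have const: "\<forall>n\<ge>N. s * SS k n \<ge> 1" if s: "s = 1 \<or> s = -1" and sN: "s * SS k N \<ge> 1" for s :: int
  proof -
    have "s * SS k (N + j) \<ge> 1" for j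
    proof (induction j)
      case 0 then show ?case using sN by simp
    next
      case (Suc j)
      have b1: "SS k (N + j) \<ge> 2 \<or> SS k (N + j) \<le> -2" using big by simp
      have b2: "SS k (N + Suc j) \<ge> 2 \<or> SS k (N + Suc j) \<le> -2" using big by simp
      have st: "\<bar>SS k (N + Suc j) - SS k (N + j)\<bar> \<le> 2" using stepb[of "N+j"] by simp
      have st1: "SS k (N + Suc j) \<ge> SS k (N + j) - 2" using st by linarith
      have st2: "SS k (N + Suc j) \<le> SS k (N + j) + 2" using st by linarith
      from s show ?case
      proof
        assume s1: "s = 1"
        then have "SS k (N + j) \<ge> 1" using Suc.IH by simp
        then have "SS k (N + Suc j) \<ge> 2" using b1 b2 st1 by linarith
        then show ?case using s1 by simp
      next
        assume s1: "s = -1"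
        then have "SS k (N + j) \<le> -1" using Suc.IH by simp
        then have "SS k (N + Suc j) \<le> -2" using b1 b2 st2 by linarith
        then show ?case using s1 by simp
      qed
    qed
    then have X: "s * SS k (N + (n - N)) \<ge> 1" for n by blast
    have "s * SS k n \<ge> 1" if "n \<ge> N" for n
      using that X[of n] by simp
    then show ?thesis by blast
  qed
  have "SS k N \<ge> 2 \<or> SS k N \<le> -2" using big by simp
  then show False
  proof
    assume "SS k N \<ge> 2"
    then have "\<forall>n\<ge>N. 1 * SS k n \<ge> 1" using const[of 1] by simp
    then show False using no_sign[of 1 k N] k0 by simp
  next
    assume "SS k N \<le> -2"
    then have "\<forall>n\<ge>N. (-1) * SS k n \<ge> 1" using const[of "-1"] by simp
    then show False using no_sign[of "-1" k N] k0 by simp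
  qed
qed


end
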